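(* Assume condition (A1) on the sequence $(\beta_n)$. Then, for an arbitrary choice of the groups $G_1,\ldots,G_m$, the non-marginal multiple testing procedure is asymptotically consistent: $P$-almost surely, $\delta_{NM}(\mathbf d^t\mid\mathbf X_n)=1$ for all sufficiently large $n$. In particular $\lim_{n\to\infty}\delta_{NM}(\mathbf d^t\mid\mathbf X_n)=1$ a.s. and $\lim_{n\to\infty}E_{\mathbf X_n}[\delta_{NM}(\mathbf d^t\mid\mathbf X_n)]=1$.
   Context: Data and models: $\mathbf X_n=(X_1,\ldots,X_n)$ are the first $n$ coordinates of a process with true distribution $P$; $p(\mathbf X_n)$ is the true joint density and $f_{\boldsymbol\theta}(\mathbf X_n)$ the postulated density for $\boldsymbol\theta=(\theta_1,\ldots,\theta_M)\in\boldsymbol\Theta=\Theta_1\times\cdots\times\Theta_M$ ($M\le\infty$); $P$ need not belong to the postulated family. $\pi$ is a prior on $\boldsymbol\Theta$, $\pi(\cdot\mid\mathbf X_n)$ the posterior; $E_{\mathbf X_n},P_{\mathbf X_n}$ denote expectation/probability over the data under $P$. For finitely many indices $i=1,\ldots,m$ ($1<m\le M$) one tests $H_{0i}:\theta_i\in\Theta_{0i}$ vs $H_{1i}:\theta_i\in\Theta_{1i}$, where $\Theta_{0i}\cap\Theta_{1i}=\emptyset$, $\Theta_{0i}\cup\Theta_{1i}=\Theta_i$. A decision configuration is $\mathbf d=(d_1,\ldots,d_m)\in\mathbb D=\{0,1\}^m$ ($d_i=1$ means $H_{0i}$ is rejected); $\Theta_{d_jj}$ means $\Theta_{0j}$ if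 $d_j=0$ and $\Theta_{1j}$ if $d_j=1$. $\mathbf 0,\mathbf 1$ denote the all-zero and all-one configurations. KL quantities: $h(\boldsymbol\theta)=\lim_{n}n^{-1}E_P[\log(p(\mathbf X_n)/f_{\boldsymbol\theta}(\mathbf X_n))]$; for measurable $A$, $h(A)=\pi\text{-}\operatorname{ess\,inf}_{\boldsymbol\theta\in A}h(\boldsymbol\theta)$, $J(\boldsymbol\theta)=h(\boldsymbol\theta)-h(\boldsymbol\Theta)$, $J(A)=\pi\text{-}\operatorname{ess\,inf}_{\boldsymbol\theta\in A}J(\boldsymbol\theta)$. Let $\boldsymbol\Theta(\mathbf d)=\prod_{i=1}^m\Theta_{d_ii}\times\prod_{i>m}\Theta_i$; the true configuration $\mathbf d^t$ is the unique $\mathbf d$ with $J(\boldsymbol\Theta(\mathbf d))=J(\boldsymbol\Theta)$. Groups and sets: for each $i$ a set $G_i\subseteq\{1,\ldots,m\}$ with $i\in G_i$ is fixed. Let $\Psi_{i\mathbf d}=\{\boldsymbol\theta:\theta_i\in\Theta_{1i},\ \theta_j\in\Theta_{d_jj}\ \forall j\in G_i\setminus\{i\}\}$ and $\Upsilon_{ki}=\{\boldsymbol\theta:\theta_i\in\Theta_{ki}\}$, $k=0,1$. Write $J(\boldsymbol\Theta_{i\mathbf d})=J(\Psi_{i\mathbf d})$, $J(\boldsymbol\Theta^c_{i\mathbf d})=J(\boldsymbol\Theta\setminus\Psi_{i\mathbf d})$, $J(H_{ki})=J(\Upsilon_{ki})$. $\mathbb D_i=\{\mathbf d: d_j=d^t_j\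 \forall j\in G_i\}$. Posterior probabilities: $w_{in}(\mathbf d)=\pi(\Psi_{i\mathbf d}\mid\mathbf X_n)$, $v_{in}=\pi(\Upsilon_{1i}\mid\mathbf X_n)$. Standing assumption (posterior exponential concentration, i.e. the conclusion of Shalizi's (2009) theorem under his conditions (S1)–(S7), assumed throughout): for all $i,\mathbf d,k$ the sets $A=\Psi_{i\mathbf d}$, $\boldsymbol\Theta\setminus\Psi_{i\mathbf d}$, $\Upsilon_{ki}$ have $\pi(A)>0$ and satisfy $\lim_{n\to\infty}n^{-1}\log\pi(A\mid\mathbf X_n)=-J(A)$ $P$-a.s.; moreover $J(\boldsymbol\Theta_{i\mathbf d})>0$ for $\mathbf d\notin\mathbb D_i$, $J(\boldsymbol\Theta_{i\mathbf d^t})>0$ when $d^t_i=0$, $J(\boldsymbol\Theta^c_{i\mathbf d^t})>0$ when $d^t_i=1$, $J(H_{1i})>0$ when $d^t_i=0$, $J(H_{0i})>0$ when $d^t_i=1$. Procedures: given $\beta_n\in[0,1)$, the non-marginal procedure selects $\hat{\mathbf d}=\arg\max_{\mathbf d\in\mathbb D}\sum_{i=1}^m d_i(w_{in}(\mathbf d)-\beta_n)$ (ties broken by any fixed rule) and sets $\delta_{NM}(\mathbf d\mid\mathbf X_n)=1$ if $\mathbf d=\hat{\mathbf d}$ and $0$ otherwise. The additive-loss procedure is the special case $G_i=\{i\}$ for all $i$, i.e. $\hat d_i=I(v_{in}>\beta_n)$. A procedure $\mathcal M$ with decision indicator $\delta_{\mathcal M}$ is asymptotically consistent if $\lim_n\delta_{\mathcal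 M}(\mathbf d^t\mid\mathbf X_n)=1$ almost surely. Condition (A1): $\liminf_{n}\beta_n>0$ and $\limsup_{n}\beta_n<1$. *)

theory Defs
  imports "HOL-Probability.Probability"
begin

definition data :: "(nat \<Rightarrow> 'w \<Rightarrow> 'x) \<Rightarrow> nat \<Rightarrow> 'w \<Rightarrow> 'x list" where
  "data X n \<omega> = map (\<lambda>i. X i \<omega>) [1..<Suc n]"

definition post_prob :: "'t measure \<Rightarrow> ('t \<Rightarrow> 'y \<Rightarrow> real) \<Rightarrow> 'y \<Rightarrow> 't set \<Rightarrow> real" where
  "post_prob pr f y A = (LINT t:A|pr. f t y) / (LINT t|pr. f t y)"

definition post :: "(nat \<Rightarrow> 'w \<Rightarrow> 'x) \<Rightarrow> 't measure \<Rightarrow> ('t \<Rightarrow> 'x list \<Rightarrow> real)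
    \<Rightarrow> nat \<Rightarrow> 'w \<Rightarrow> 't set \<Rightarrow> real" where
  "post X pr f n \<omega> A = post_prob pr f (data X n \<omega>) A"

definition ess_inf_on :: "'t measure \<Rightarrow> 't set \<Rightarrow> ('t \<Rightarrow> real) \<Rightarrow> real" where
  "ess_inf_on pr A g = Sup {c. AE t in pr. t \<in> A \<longrightarrow> c \<le> g t}"

definition KL_rate :: "'w measure \<Rightarrow> (nat \<Rightarrow> 'w \<Rightarrow> 'x) \<Rightarrow> ('x list \<Rightarrow> real)
    \<Rightarrow> ('t \<Rightarrow> 'x list \<Rightarrow> real) \<Rightarrow> 't \<Rightarrow> real" where
  "KL_rate M X p f \<theta> =
     lim (\<lambda>n. (LINT \<omega>|M. ln (p (data X n \<omega>) / f \<theta> (data X n \<omega>))) / real n)"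

definition Jfun :: "'w measure \<Rightarrow> (nat \<Rightarrow> 'w \<Rightarrow> 'x) \<Rightarrow> ('x list \<Rightarrow> real)
    \<Rightarrow> ('t \<Rightarrow> 'x list \<Rightarrow> real) \<Rightarrow> 't measure \<Rightarrow> 't \<Rightarrow> real" where
  "Jfun M X p f pr \<theta> = KL_rate M X p f \<theta> - ess_inf_on pr (space pr) (KL_rate M X p f)"

definition Jset :: "'w measure \<Rightarrow> (nat \<Rightarrow> 'w \<Rightarrow> 'x) \<Rightarrow> ('x list \<Rightarrow> real)
    \<Rightarrow> ('t \<Rightarrow> 'x list \<Rightarrow> real) \<Rightarrow> 't measure \<Rightarrow> 't set \<Rightarrow> real" where
  "Jset M X p f pr A = ess_inf_on pr A (Jfun M X p f pr)"

text \<open>Decision configurations d in {0,1}^m are represented by the set of rejected indices, d \<subseteq> {1..m}.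
  Theta_{d_j j}.\<close>
definition sel_set :: "(nat \<Rightarrow> 'a set) \<Rightarrow> (nat \<Rightarrow> 'a set) \<Rightarrow> nat set \<Rightarrow> nat \<Rightarrow> 'a set" where
  "sel_set \<Theta>0 \<Theta>1 d j = (if j \<in> d then \<Theta>1 j else \<Theta>0 j)"

definition config_set :: "(nat \<Rightarrow> 'a) measure \<Rightarrow> (nat \<Rightarrow> 'a set) \<Rightarrow> (nat \<Rightarrow> 'a set) \<Rightarrow> nat
    \<Rightarrow> nat set \<Rightarrow> (nat \<Rightarrow> 'a) set" where
  "config_set pr \<Theta>0 \<Theta>1 m d = {\<theta> \<in> space pr. \<forall>j\<in>{1..m}. \<theta> j \<in> sel_set \<Theta>0 \<Theta>1 d j}"

definition Psi :: "(nat \<Rightarrow> 'a) measure \<Rightarrow> (nat \<Rightarrow> 'a set) \<Rightarrow> (nat \<Rightarrow> 'a set) \<Rightarrow> (nat \<Rightarrow> nat set)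
    \<Rightarrow> nat \<Rightarrow> nat set \<Rightarrow> (nat \<Rightarrow> 'a) set" where
  "Psi pr \<Theta>0 \<Theta>1 G i d =
     {\<theta> \<in> space pr. \<theta> i \<in> \<Theta>1 i \<and> (\<forall>j \<in> G i - {i}. \<theta> j \<in> sel_set \<Theta>0 \<Theta>1 d j)}"

definition Ups :: "(nat \<Rightarrow> 'a) measure \<Rightarrow> (nat \<Rightarrow> 'a set) \<Rightarrow> nat \<Rightarrow> (nat \<Rightarrow> 'a) set" where
  "Ups pr \<Theta>k i = {\<theta> \<in> space pr. \<theta> i \<in> \<Theta>k i}"

definition NM_score :: "(nat \<Rightarrow> nat set \<Rightarrow> real) \<Rightarrow> real \<Rightarrow> nat set \<Rightarrow> real" where
  "NM_score w b d = (\<Sum>i\<in>d. (w i d - b))"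

text \<open>delta_NM(d | X_n): the selected configuration is the maximiser picked by the
  fixed tie-breaking rule tiebreak (a function of the score function).\<close>
definition delta_NM :: "(nat \<Rightarrow> 'w \<Rightarrow> 'x) \<Rightarrow> (nat \<Rightarrow> 'a) measure \<Rightarrow> ((nat \<Rightarrow> 'a) \<Rightarrow> 'x list \<Rightarrow> real)
    \<Rightarrow> (nat \<Rightarrow> 'a set) \<Rightarrow> (nat \<Rightarrow> 'a set) \<Rightarrow> (nat \<Rightarrow> nat set) \<Rightarrow> (nat \<Rightarrow> real)
    \<Rightarrow> ((nat set \<Rightarrow> real) \<Rightarrow> nat set) \<Rightarrow> nat \<Rightarrow> 'w \<Rightarrow> nat set \<Rightarrow> real" where
  "delta_NM X pr f \<Theta>0 \<Theta>1 G \<beta> tiebreak n \<omega> d =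
     (if tiebreak (NM_score (\<lambda>i d'. post X pr f n \<omega> (Psi pr \<Theta>0 \<Theta>1 G i d')) (\<beta> n)) = d
      then 1 else 0)"

end

theory Submission
  imports Defs
begin


lemma ev_small:
  fixes a :: "nat \<Rightarrow> real"
  assumes lim: "(\<lambda>n. ln (a n) / real n) \<longlonglongrightarrow> - J" and J: "0 < J" and e: "0 < \<epsilon>"
  shows "eventually (\<lambda>n. a n < \<epsilon>) sequentially"
proof -
  have 1: "eventually (\<lambda>n. ln (a n) / real n < - J / 2) sequentially"
    using order_tendstoD(2)[OF lim, of "-J/2"] J by simp
  obtain N :: nat where N: "(- ln \<epsilon>) / (J/2) < real N" using reals_Archimedean2 by blast
  have 2: "eventually (\<lambda>n. N + 1 \<le> n) sequentially" by (rule eventually_ge_at_top)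
  show ?thesis using 1 2
  proof eventually_elim
    case (elim n)
    have np: "0 < real n" using elim(2) by simp
    have "ln (a n) < - J / 2 * real n" using elim(1) np by (simp add: field_simps)
    moreover have "- ln \<epsilon> < J/2 * real n"
    proof -
      have "- ln \<epsilon> < J/2 * real N" using N J by (simp add: field_simps)
      also have "\<dots> \<le> J/2 * real n" using elim(2) J by (intro mult_left_mono) auto
      finally show ?thesis .
    qed
    ultimately have "ln (a n) < ln \<epsilon>" by linarith
    then show ?case
      by (cases "a n > 0") (use e in auto)
  qed
qed

lemma post_compl:
  fixes pr :: "'t measure" and g :: "'t \<Rightarrow> real"
  assumes "A \<in> sets pr" "integrable pr g"
  shows "(LINT t:(space pr - A)|pr. g t) = (LINT t|pr. g t) - (LINT t:A|pr. g t)"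
proof -
  have "(LINT t:(space pr - A)|pr. g t) = (LINT t|pr. g t - indicator A t *\<^sub>R g t)"
    unfolding set_lebesgue_integral_def
    by (intro Bochner_Integration.integral_cong) (auto simp: indicator_def)
  also have "\<dots> = (LINT t|pr. g t) - (LINT t|pr. indicator A t *\<^sub>R g t)"
    by (intro Bochner_Integration.integral_diff assms integrable_mult_indicator)
  finally show ?thesis unfolding set_lebesgue_integral_def .
qed



lemma score_lemma:
  fixes W :: "nat \<Rightarrow> nat set \<Rightarrow> real" and G :: "nat \<Rightarrow> nat set"
  assumes dt: "dt \<subseteq> {1..m}" and d: "d \<subseteq> {1..m}" and ne: "d \<noteq> dt"
    and eb: "\<epsilon> < b" "b < 1 - \<epsilon>" "2 * \<epsilon> < 1"
    and small: "\<forall>i\<in>{1..m}. \<forall>d. d \<subseteq> {1..m} \<longrightarrow>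
        (i \<notin> dt \<or> \<not> (\<forall>j\<in>G i. (j \<in> d) = (j \<in> dt))) \<longrightarrow> W i d < \<epsilon>"
    and big: "\<forall>i\<in>{1..m}. \<forall>d. d \<subseteq> {1..m} \<longrightarrow>
        (i \<in> dt \<and> (\<forall>j\<in>G i. (j \<in> d) = (j \<in> dt))) \<longrightarrow> 1 - \<epsilon> < W i d"
    and same: "\<forall>i\<in>{1..m}. \<forall>d. (\<forall>j\<in>G i. (j \<in> d) = (j \<in> dt)) \<longrightarrow> W i d = W i dt"
  shows "NM_score W b d < NM_score W b dt"
proof -
  have fd: "finite d" "finite dt" using d dt finite_subset by auto
  have s1: "NM_score W b d = (\<Sum>i\<in>d - dt. W i d - b) + (\<Sum>i\<in>d \<inter> dt. W i d - b)"
    proof -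
    have "d - d \<inter> dt = d - dt" by auto
    then show ?thesis unfolding NM_score_def using sum.subset_diff[of "d \<inter> dt" d "\<lambda>i. W i d - b"] fd by (metis Int_lower1)
  qed
  have s2: "NM_score W b dt = (\<Sum>i\<in>dt - d. W i dt - b) + (\<Sum>i\<in>d \<inter> dt. W i dt - b)"
    proof -
    have "dt - d \<inter> dt = dt - d" by auto
    then show ?thesis unfolding NM_score_def using sum.subset_diff[of "d \<inter> dt" dt "\<lambda>i. W i dt - b"] fd by (metis Int_lower2)
  qed
  have A: "\<And>i. i \<in> d - dt \<Longrightarrow> 0 < b - W i d"
  proof -
    fix i assume i: "i \<in> d - dt"
    then have "W i d < \<epsilon>" using small d by blast
    then show "0 < b - W i d" using eb by linarith
  qed
  have B: "\<And>i. i \<in> dt - d \<Longrightarrow> 0 < W i dt - b"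
  proof -
    fix i assume i: "i \<in> dt - d"
    then have "1 - \<epsilon> < W i dt" using big dt by blast
    then show "0 < W i dt - b" using eb by linarith
  qed
  have C: "(\<Sum>i\<in>d \<inter> dt. W i d - b) \<le> (\<Sum>i\<in>d \<inter> dt. W i dt - b)"
  proof (rule sum_mono)
    fix i assume i: "i \<in> d \<inter> dt"
    show "W i d - b \<le> W i dt - b"
    proof (cases "\<forall>j\<in>G i. (j \<in> d) = (j \<in> dt)")
      case True
      have "i \<in> {1..m}" using i d by auto
      then have "W i d = W i dt" using same True by blast
      then show ?thesis by simp
    next
      case False
      then have "W i d < \<epsilon>" using small i d by blast
      moreover have "1 - \<epsilon> < W i dt" using big i dt by blast
      ultimately show ?thesis using eb by linarith
    qed
  qed
  have SA: "(\<Sum>i\<in>d - dt. W i d - b) \<le> 0" and SB: "0 \<le> (\<Sum>i\<in>dt - d. W i dt - b)"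
  proof -
    have "0 \<le> (\<Sum>i\<in>d - dt. b - W i d)" using A by (intro sum_nonneg) (auto intro: less_imp_le)
    then show "(\<Sum>i\<in>d - dt. W i d - b) \<le> 0" by (simp add: sum_subtractf)
    show "0 \<le> (\<Sum>i\<in>dt - d. W i dt - b)" using B by (intro sum_nonneg) (auto intro: less_imp_le)
  qed
  have "d - dt \<noteq> {} \<or> dt - d \<noteq> {}" using ne by auto
  then have "(\<Sum>i\<in>d - dt. W i d - b) < 0 \<or> 0 < (\<Sum>i\<in>dt - d. W i dt - b)"
  proof
    assume "d - dt \<noteq> {}"
    then have "0 < (\<Sum>i\<in>d - dt. b - W i d)" using A fd by (intro sum_pos) auto
    then show ?thesis by (simp add: sum_subtractf)
  next
    assume "dt - d \<noteq> {}"
    then show ?thesis using B fd by (intro disjI2 sum_pos) auto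
  qed
  then show ?thesis using s1 s2 C SA SB by linarith
qed

lemma Psi_same:
  assumes "\<forall>j\<in>G i. (j \<in> d) = (j \<in> dt)"
  shows "Psi pr \<Theta>0 \<Theta>1 G i d = Psi pr \<Theta>0 \<Theta>1 G i dt"
  using assms unfolding Psi_def sel_set_def by auto



theorem theorem2:
  fixes M :: "'w measure" and X :: "nat \<Rightarrow> 'w \<Rightarrow> 'x"
    and p :: "'x list \<Rightarrow> real" and f :: "(nat \<Rightarrow> 'a) \<Rightarrow> 'x list \<Rightarrow> real"
    and prior :: "(nat \<Rightarrow> 'a) measure"
    and \<Theta>0 \<Theta>1 :: "nat \<Rightarrow> 'a set" and m :: nat
    and G :: "nat \<Rightarrow> nat set" and dt :: "nat set"
    and \<beta> :: "nat \<Rightarrow> real"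
    and tiebreak :: "(nat set \<Rightarrow> real) \<Rightarrow> nat set"
  assumes P: "prob_space M"
    and prior: "prob_space prior"
    and f_nonneg: "\<forall>\<theta> x. 0 \<le> f \<theta> x"
    and f_int: "\<forall>n. \<forall>\<omega>\<in>space M. integrable prior (\<lambda>\<theta>. f \<theta> (data X n \<omega>))"
    and f_pos: "\<forall>n. \<forall>\<omega>\<in>space M. 0 < (LINT \<theta>|prior. f \<theta> (data X n \<omega>))"
    and m: "1 < m"
    and disj: "\<forall>i\<in>{1..m}. \<Theta>0 i \<inter> \<Theta>1 i = {}"
    and cover: "\<forall>\<theta>\<in>space prior. \<forall>i\<in>{1..m}. \<theta> i \<in> \<Theta>0 i \<union> \<Theta>1 i"
    and groups: "\<forall>i\<in>{1..m}. i \<in> G i \<and> G i \<subseteq> {1..m}"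
    and dt_sub: "dt \<subseteq> {1..m}"
    and dt_true: "\<forall>d. d \<subseteq> {1..m} \<longrightarrow>
        (Jset M X p f prior (config_set prior \<Theta>0 \<Theta>1 m d) = Jset M X p f prior (space prior)
         \<longleftrightarrow> d = dt)"
    and conc: "\<forall>i\<in>{1..m}. \<forall>d. d \<subseteq> {1..m} \<longrightarrow>
        (\<forall>A \<in> {Psi prior \<Theta>0 \<Theta>1 G i d, space prior - Psi prior \<Theta>0 \<Theta>1 G i d,
                Ups prior \<Theta>0 i, Ups prior \<Theta>1 i}.
           A \<in> sets prior \<and> 0 < measure prior A \<and>
           (AE \<omega> in M. (\<lambda>n. ln (post X prior f n \<omega> A) / real n)
                          \<longlonglongrightarrow> - Jset M X p f prior A))"
    and pos_notD: "\<forall>i\<in>{1..m}. \<forall>d. d \<subseteq> {1..m} \<and> \<not> (\<forall>j\<in>G i. (j \<in> d) = (j \<in> dt)) \<longrightarrow>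
        0 < Jset M X p f prior (Psi prior \<Theta>0 \<Theta>1 G i d)"
    and pos_dt0: "\<forall>i\<in>{1..m}. i \<notin> dt \<longrightarrow> 0 < Jset M X p f prior (Psi prior \<Theta>0 \<Theta>1 G i dt)"
    and pos_dt1: "\<forall>i\<in>{1..m}. i \<in> dt \<longrightarrow>
        0 < Jset M X p f prior (space prior - Psi prior \<Theta>0 \<Theta>1 G i dt)"
    and pos_H1: "\<forall>i\<in>{1..m}. i \<notin> dt \<longrightarrow> 0 < Jset M X p f prior (Ups prior \<Theta>1 i)"
    and pos_H0: "\<forall>i\<in>{1..m}. i \<in> dt \<longrightarrow> 0 < Jset M X p f prior (Ups prior \<Theta>0 i)"
    and beta_range: "\<forall>n. 0 \<le> \<beta> n \<and> \<beta> n < 1"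
    and A1: "0 < liminf (\<lambda>n. ereal (\<beta> n))" "limsup (\<lambda>n. ereal (\<beta> n)) < 1"
    and tiebreak: "\<forall>g. tiebreak g \<subseteq> {1..m} \<and> (\<forall>d. d \<subseteq> {1..m} \<longrightarrow> g d \<le> g (tiebreak g))"
    and delta_meas: "\<forall>n. (\<lambda>\<omega>. delta_NM X prior f \<Theta>0 \<Theta>1 G \<beta> tiebreak n \<omega> dt) \<in> borel_measurable M"
  shows "(AE \<omega> in M. eventually (\<lambda>n. delta_NM X prior f \<Theta>0 \<Theta>1 G \<beta> tiebreak n \<omega> dt = 1) sequentially)
    \<and> (AE \<omega> in M. (\<lambda>n. delta_NM X prior f \<Theta>0 \<Theta>1 G \<beta> tiebreak n \<omega> dt) \<longlonglongrightarrow> 1)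
    \<and> (\<lambda>n. LINT \<omega>|M. delta_NM X prior f \<Theta>0 \<Theta>1 G \<beta> tiebreak n \<omega> dt) \<longlonglongrightarrow> 1"
  proof -
  interpret M: prob_space M by (rule P)
  let ?J = "Jset M X p f prior"
  let ?Psi = "Psi prior \<Theta>0 \<Theta>1 G"
  let ?w = "\<lambda>n \<omega> i d. post X prior f n \<omega> (?Psi i d)"
  let ?c = "\<lambda>n \<omega> i d. post X prior f n \<omega> (space prior - ?Psi i d)"
  let ?D = "\<lambda>i d. \<forall>j\<in>G i. (j \<in> d) = (j \<in> dt)"
  have fin: "finite {1..m}" "finite (Pow {1..m})" by auto
  have AE1: "AE \<omega> in M. \<forall>i\<in>{1..m}. \<forall>d\<in>Pow {1..m}.
      ((\<lambda>n. ln (?w n \<omega> i d) / real n) \<longlonglongrightarrow> - ?J (?Psi i d)) \<and>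
      ((\<lambda>n. ln (?c n \<omega> i d) / real n) \<longlonglongrightarrow> - ?J (space prior - ?Psi i d))"
  proof (intro eventually_ball_finite fin ballI)
    fix i d assume i: "i \<in> {1..m}" and d: "d \<in> Pow {1..m}"
    have c: "\<forall>A \<in> {?Psi i d, space prior - ?Psi i d, Ups prior \<Theta>0 i, Ups prior \<Theta>1 i}.
           A \<in> sets prior \<and> 0 < measure prior A \<and>
           (AE \<omega> in M. (\<lambda>n. ln (post X prior f n \<omega> A) / real n) \<longlonglongrightarrow> - ?J A)"
      using conc i d by blast
    have 1: "AE \<omega> in M. (\<lambda>n. ln (?w n \<omega> i d) / real n) \<longlonglongrightarrow> - ?J (?Psi i d)"
      using c by blast
    have 2: "AE \<omega> in M. (\<lambda>n. ln (?c n \<omega> i d) / real n) \<longlonglongrightarrow> - ?J (space prior - ?Psi i d)"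
      using c by blast
    show "AE \<omega> in M. ((\<lambda>n. ln (?w n \<omega> i d) / real n) \<longlonglongrightarrow> - ?J (?Psi i d)) \<and>
      ((\<lambda>n. ln (?c n \<omega> i d) / real n) \<longlonglongrightarrow> - ?J (space prior - ?Psi i d))"
      using 1 2 by eventually_elim auto
  qed
  have meas: "?Psi i d \<in> sets prior" if "i \<in> {1..m}" "d \<subseteq> {1..m}" for i d
    using conc that by blast
  have compl: "?w n \<omega> i d = 1 - ?c n \<omega> i d"
    if "\<omega> \<in> space M" "i \<in> {1..m}" "d \<subseteq> {1..m}" for n \<omega> i d
  proof -
    let ?g = "\<lambda>\<theta>. f \<theta> (data X n \<omega>)"
    have I: "integrable prior ?g" using f_int that by blast
    have Z: "0 < (LINT \<theta>|prior. ?g \<theta>)" using f_pos that by blast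
    have "(LINT t:(space prior - ?Psi i d)|prior. ?g t) = (LINT t|prior. ?g t) - (LINT t:?Psi i d|prior. ?g t)"
      by (rule post_compl[OF meas[OF that(2,3)] I])
    then show ?thesis using Z unfolding post_def post_prob_def by (simp add: field_simps)
  qed
  obtain bl where bl: "0 < bl" "eventually (\<lambda>n. bl < \<beta> n) sequentially"
  proof -
    obtain z where z: "0 < ereal z" "ereal z < liminf (\<lambda>n. ereal (\<beta> n))"
      using ereal_dense2[OF A1(1)] by blast
    have "eventually (\<lambda>n. ereal z < ereal (\<beta> n)) sequentially" by (rule less_LiminfD[OF z(2)])
    then have "eventually (\<lambda>n. z < \<beta> n) sequentially" by simp
    with z(1) show ?thesis using that by simp
  qed
  obtain bh where bh: "bh < 1" "eventually (\<lambda>n. \<beta> n < bh) sequentially"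
  proof -
    obtain z where z: "limsup (\<lambda>n. ereal (\<beta> n)) < ereal z" "ereal z < 1"
      using ereal_dense2[OF A1(2)] by blast
    have "eventually (\<lambda>n. ereal (\<beta> n) < ereal z) sequentially" by (rule Limsup_lessD[OF z(1)])
    then have "eventually (\<lambda>n. \<beta> n < z) sequentially" by simp
    with z(2) show ?thesis using that by simp
  qed
  define \<epsilon> where "\<epsilon> = min (min bl (1 - bh)) (1/2) / 2"
  have e: "0 < \<epsilon>" "\<epsilon> < bl" "\<epsilon> < 1 - bh" "2 * \<epsilon> < 1"
    using bl(1) bh(1) unfolding \<epsilon>_def by auto
  have AE2: "AE \<omega> in M. eventually (\<lambda>n. delta_NM X prior f \<Theta>0 \<Theta>1 G \<beta> tiebreak n \<omega> dt = 1) sequentially"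
    using AE1 AE_space
  proof eventually_elim
    case (elim \<omega>)
    have Es: "eventually (\<lambda>n. \<forall>i\<in>{1..m}. \<forall>d\<in>Pow {1..m}.
        (i \<notin> dt \<or> \<not> ?D i d) \<longrightarrow> ?w n \<omega> i d < \<epsilon>) sequentially"
    proof (intro eventually_ball_finite fin ballI)
      fix i d assume i: "i \<in> {1..m}" and d: "d \<in> Pow {1..m}"
      show "eventually (\<lambda>n. (i \<notin> dt \<or> \<not> ?D i d) \<longrightarrow> ?w n \<omega> i d < \<epsilon>) sequentially"
      proof (cases "i \<notin> dt \<or> \<not> ?D i d")
        case True
        have pos: "0 < ?J (?Psi i d)"
        proof (cases "?D i d")
          case True
          then have "?Psi i d = ?Psi i dt" by (rule Psi_same)
          moreover have "i \<notin> dt" using True \<open>i \<notin> dt \<or> \<not> ?D i d\<close> by blast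
          ultimately show ?thesis using pos_dt0 i by simp
        next
          case False then show ?thesis using pos_notD i d by blast
        qed
        have "(\<lambda>n. ln (?w n \<omega> i d) / real n) \<longlonglongrightarrow> - ?J (?Psi i d)" using elim(1) i d by blast
        from ev_small[OF this pos e(1)] show ?thesis by (rule eventually_mono) simp
      next
        case False show ?thesis by (rule always_eventually) (use False in blast)
      qed
    qed
    have Eb: "eventually (\<lambda>n. \<forall>i\<in>{1..m}. \<forall>d\<in>Pow {1..m}.
        (i \<in> dt \<and> ?D i d) \<longrightarrow> ?c n \<omega> i d < \<epsilon>) sequentially"
    proof (intro eventually_ball_finite fin ballI)
      fix i d assume i: "i \<in> {1..m}" and d: "d \<in> Pow {1..m}"
      show "eventually (\<lambda>n. (i \<in> dt \<and> ?D i d) \<longrightarrow> ?c n \<omega> i d < \<epsilon>) sequentially"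
      proof (cases "i \<in> dt \<and> ?D i d")
        case True
        then have eq: "?Psi i d = ?Psi i dt" using Psi_same by blast
        have pos: "0 < ?J (space prior - ?Psi i d)" unfolding eq using pos_dt1 i True by blast
        have "(\<lambda>n. ln (?c n \<omega> i d) / real n) \<longlonglongrightarrow> - ?J (space prior - ?Psi i d)" using elim(1) i d by blast
        from ev_small[OF this pos e(1)] show ?thesis by (rule eventually_mono) simp
      next
        case False show ?thesis by (rule always_eventually) (use False in blast)
      qed
    qed
    show ?case using Es Eb bl(2) bh(2)
    proof eventually_elim
      case (elim n)
      let ?W = "\<lambda>i d'. ?w n \<omega> i d'"
      let ?g = "NM_score ?W (\<beta> n)"
      have strict: "?g d < ?g dt" if d: "d \<subseteq> {1..m}" "d \<noteq> dt" for d
      proof (rule score_lemma[OF dt_sub d, where \<epsilon> = \<epsilon> and G = G])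
        show "\<epsilon> < \<beta> n" using elim(3) e by linarith
        show "\<beta> n < 1 - \<epsilon>" using elim(4) e by linarith
        show "2 * \<epsilon> < 1" by (rule e(4))
        show "\<forall>i\<in>{1..m}. \<forall>d. d \<subseteq> {1..m} \<longrightarrow> (i \<notin> dt \<or> \<not> ?D i d) \<longrightarrow> ?W i d < \<epsilon>"
          using elim(1) by blast
        show "\<forall>i\<in>{1..m}. \<forall>d. d \<subseteq> {1..m} \<longrightarrow> (i \<in> dt \<and> ?D i d) \<longrightarrow> 1 - \<epsilon> < ?W i d"
        proof (intro ballI allI impI)
          fix i d assume i: "i \<in> {1..m}" and d: "d \<subseteq> {1..m}" and c: "i \<in> dt \<and> ?D i d"
          have "?c n \<omega> i d < \<epsilon>" using elim(2) i d c by blast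
          moreover have "?w n \<omega> i d = 1 - ?c n \<omega> i d" using compl[OF \<open>\<omega> \<in> space M\<close> i d] .
          ultimately show "1 - \<epsilon> < ?W i d" by simp
        qed
        show "\<forall>i\<in>{1..m}. \<forall>d. ?D i d \<longrightarrow> ?W i d = ?W i dt"
          using Psi_same by metis
      qed
      have "tiebreak ?g = dt"
      proof (rule ccontr)
        assume ne: "tiebreak ?g \<noteq> dt"
        have "tiebreak ?g \<subseteq> {1..m}" "?g dt \<le> ?g (tiebreak ?g)" using tiebreak dt_sub by blast+
        with strict[OF this(1) ne] show False by linarith
      qed
      then show ?case unfolding delta_NM_def by simp
    qed
  qed
  have AE3: "AE \<omega> in M. (\<lambda>n. delta_NM X prior f \<Theta>0 \<Theta>1 G \<beta> tiebreak n \<omega> dt) \<longlonglongrightarrow> 1"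
    using AE2 by eventually_elim (rule tendsto_eventually)
  have "(\<lambda>n. LINT \<omega>|M. delta_NM X prior f \<Theta>0 \<Theta>1 G \<beta> tiebreak n \<omega> dt) \<longlonglongrightarrow> (LINT \<omega>|M. 1)"
  proof (rule integral_dominated_convergence[where w = "\<lambda>_. 1"])
    show "(\<lambda>_. 1::real) \<in> borel_measurable M" by simp
    show "\<And>n. (\<lambda>\<omega>. delta_NM X prior f \<Theta>0 \<Theta>1 G \<beta> tiebreak n \<omega> dt) \<in> borel_measurable M"
      using delta_meas by blast
    show "integrable M (\<lambda>_. 1::real)" by simp
    show "AE \<omega> in M. (\<lambda>n. delta_NM X prior f \<Theta>0 \<Theta>1 G \<beta> tiebreak n \<omega> dt) \<longlonglongrightarrow> 1" by (rule AE3)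
    show "\<And>n. AE \<omega> in M. norm (delta_NM X prior f \<Theta>0 \<Theta>1 G \<beta> tiebreak n \<omega> dt) \<le> 1"
      by (rule AE_I2) (simp add: delta_NM_def)
  qed
  then have "(\<lambda>n. LINT \<omega>|M. delta_NM X prior f \<Theta>0 \<Theta>1 G \<beta> tiebreak n \<omega> dt) \<longlonglongrightarrow> 1"
    by (simp add: M.prob_space)
  with AE2 AE3 show ?thesis by blast
qed

end
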